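(* Let $I$ be a $\ast$-homog ideal of $D$ and let $M(I)$ be the unique maximal $\ast$-ideal containing $I$. Then $ID_{M(I)}\cap D=I$.
   Context: $D$ is an integral domain and $\ast$ is a star operation on $D$ of finite character. A $\ast$-ideal is a nonzero fractional ideal $I$ with $I^\ast=I$; it is of finite type if $I=J^\ast$ for some nonzero finitely generated $J$. A maximal $\ast$-ideal is an integral $\ast$-ideal maximal among proper integral $\ast$-ideals. A $\ast$-homog ideal of $D$ is an integral $\ast$-ideal $I$ of finite type with $I\subsetneq D$ such that $(J+L)^{\ast}\neq D$ for every pair $J,L$ of proper integral $\ast$-ideals of finite type containing $I$. Every $\ast$-homog ideal $I$ is contained in exactly one maximal $\ast$-ideal, denoted $M(I)$ (explicitly $M(I)=\{x\in D:(xD+I)^\ast\neq D\}$). *)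

theory Defs
  imports Main
begin

text \<open>The integral domain D is represented as a subring of an ambient field 'a
(every integral domain embeds in its quotient field). Fractional ideals live in
the quotient field of D, which we describe inside 'a.\<close>

definition subdomain :: "'a::field set \<Rightarrow> bool" where
  "subdomain D \<longleftrightarrow> 0 \<in> D \<and> 1 \<in> D \<and>
     (\<forall>x\<in>D. \<forall>y\<in>D. x + y \<in> D \<and> x - y \<in> D \<and> x * y \<in> D)"

definition quot_field :: "'a::field set \<Rightarrow> 'a set" where
  "quot_field D = {a / b | a b. a \<in> D \<and> b \<in> D \<and> b \<noteq> 0}"

definition dmodule :: "'a::field set \<Rightarrow> 'a set \<Rightarrow> bool" where
  "dmodule D I \<longleftrightarrow> 0 \<in> I \<and> (\<forall>x\<in>I. \<forall>y\<in>I. x + y \<in> I) \<and> (\<forall>d\<in>D. \<forall>x\<in>I. d * x \<in> I)"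

definition frac_ideal :: "'a::field set \<Rightarrow> 'a set \<Rightarrow> bool" where
  "frac_ideal D I \<longleftrightarrow> dmodule D I \<and> I \<noteq> {0} \<and> (\<exists>d\<in>D. d \<noteq> 0 \<and> (\<forall>x\<in>I. d * x \<in> D))"

definition lin_span_in :: "'a::field set \<Rightarrow> 'a set \<Rightarrow> 'a set" where
  "lin_span_in D S = {x. \<exists>(n::nat) c s. (\<forall>k<n. c k \<in> D \<and> s k \<in> S) \<and> x = (\<Sum>k<n. c k * s k)}"

definition fin_gen :: "'a::field set \<Rightarrow> 'a set \<Rightarrow> bool" where
  "fin_gen D J \<longleftrightarrow> (\<exists>S. finite S \<and> J = lin_span_in D S)"

definition scal :: "'a::field \<Rightarrow> 'a set \<Rightarrow> 'a set" where
  "scal x I = (\<lambda>y. x * y) ` I"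

definition ideal_mult :: "'a::field set \<Rightarrow> 'a set \<Rightarrow> 'a set" where
  "ideal_mult A B = {x. \<exists>(n::nat) f g. (\<forall>k<n. f k \<in> A \<and> g k \<in> B) \<and> x = (\<Sum>k<n. f k * g k)}"

definition ideal_sum :: "'a::field set \<Rightarrow> 'a set \<Rightarrow> 'a set" where
  "ideal_sum A B = {a + b | a b. a \<in> A \<and> b \<in> B}"

definition localization :: "'a::field set \<Rightarrow> 'a set \<Rightarrow> 'a set" where
  "localization D M = {a / s | a s. a \<in> D \<and> s \<in> D \<and> s \<notin> M}"

definition star_op :: "'a::field set \<Rightarrow> ('a set \<Rightarrow> 'a set) \<Rightarrow> bool" where
  "star_op D st \<longleftrightarrow>
     (\<forall>I. frac_ideal D I \<longrightarrow> frac_ideal D (st I)) \<and>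
     (\<forall>x\<in>quot_field D - {0}. st (scal x D) = scal x D) \<and>
     (\<forall>x\<in>quot_field D - {0}. \<forall>I. frac_ideal D I \<longrightarrow> st (scal x I) = scal x (st I)) \<and>
     (\<forall>I. frac_ideal D I \<longrightarrow> I \<subseteq> st I) \<and>
     (\<forall>I J. frac_ideal D I \<longrightarrow> frac_ideal D J \<longrightarrow> I \<subseteq> J \<longrightarrow> st I \<subseteq> st J) \<and>
     (\<forall>I. frac_ideal D I \<longrightarrow> st (st I) = st I)"

definition finite_character :: "'a::field set \<Rightarrow> ('a set \<Rightarrow> 'a set) \<Rightarrow> bool" where
  "finite_character D st \<longleftrightarrow>
     (\<forall>I. frac_ideal D I \<longrightarrow>
        st I = \<Union>{st J | J. frac_ideal D J \<and> fin_gen D J \<and> J \<subseteq> I})"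

definition star_ideal :: "'a::field set \<Rightarrow> ('a set \<Rightarrow> 'a set) \<Rightarrow> 'a set \<Rightarrow> bool" where
  "star_ideal D st I \<longleftrightarrow> frac_ideal D I \<and> st I = I"

definition finite_type :: "'a::field set \<Rightarrow> ('a set \<Rightarrow> 'a set) \<Rightarrow> 'a set \<Rightarrow> bool" where
  "finite_type D st I \<longleftrightarrow> star_ideal D st I \<and>
     (\<exists>J. frac_ideal D J \<and> fin_gen D J \<and> I = st J)"

definition max_star_ideal :: "'a::field set \<Rightarrow> ('a set \<Rightarrow> 'a set) \<Rightarrow> 'a set \<Rightarrow> bool" where
  "max_star_ideal D st M \<longleftrightarrow> star_ideal D st M \<and> M \<subset> D \<and>
     (\<forall>N. star_ideal D st N \<and> N \<subset> D \<and> M \<subseteq> N \<longrightarrow> N = M)"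

definition star_homog :: "'a::field set \<Rightarrow> ('a set \<Rightarrow> 'a set) \<Rightarrow> 'a set \<Rightarrow> bool" where
  "star_homog D st I \<longleftrightarrow> finite_type D st I \<and> I \<subset> D \<and>
     (\<forall>J L. finite_type D st J \<and> J \<subset> D \<and> I \<subseteq> J \<longrightarrow>
            finite_type D st L \<and> L \<subset> D \<and> I \<subseteq> L \<longrightarrow>
            st (ideal_sum J L) \<noteq> D)"

end

theory Submission
  imports Defs
begin

lemma ideal_sum_I: "a \<in> A \<Longrightarrow> b \<in> B \<Longrightarrow> a + b \<in> ideal_sum A B"
  unfolding ideal_sum_def by blast
lemma scal_I: "y \<in> I \<Longrightarrow> x * y \<in> scal x I"
  unfolding scal_def by blast

lemma dm0: "dmodule D X \<Longrightarrow> 0 \<in> X" unfolding dmodule_def by (elim conjE)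
lemma dm_add: "dmodule D X \<Longrightarrow> x \<in> X \<Longrightarrow> y \<in> X \<Longrightarrow> x + y \<in> X"
  unfolding dmodule_def by (elim conjE) simp
lemma dm_mul: "dmodule D X \<Longrightarrow> d \<in> D \<Longrightarrow> x \<in> X \<Longrightarrow> d * x \<in> X"
  unfolding dmodule_def by (elim conjE) simp
lemma sd0: "subdomain D \<Longrightarrow> 0 \<in> D" unfolding subdomain_def by (elim conjE)
lemma sd1: "subdomain D \<Longrightarrow> 1 \<in> D" unfolding subdomain_def by (elim conjE)
lemma sd_add: "subdomain D \<Longrightarrow> x \<in> D \<Longrightarrow> y \<in> D \<Longrightarrow> x + y \<in> D"
  unfolding subdomain_def by (elim conjE) simp
lemma sd_mul: "subdomain D \<Longrightarrow> x \<in> D \<Longrightarrow> y \<in> D \<Longrightarrow> x * y \<in> D"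
  unfolding subdomain_def by (elim conjE) simp

lemma nz_set: "x \<in> X \<Longrightarrow> x \<noteq> 0 \<Longrightarrow> X \<noteq> {0}" by blast

lemma nz_sub: "A \<subseteq> X \<Longrightarrow> A \<noteq> {0} \<Longrightarrow> 0 \<in> A \<Longrightarrow> X \<noteq> {0}" by blast

lemma sum_split_add: "(\<Sum>k<n+(m::nat). h k) = (\<Sum>k<n. h k) + (\<Sum>k<m. (h (n+k)::'b::comm_monoid_add))"
  by (induct m) (simp_all add: add_ac)

lemma span_dmodule:
  assumes "subdomain D" shows "dmodule D (lin_span_in D S)"
  unfolding dmodule_def
proof (intro conjI ballI)
  show "0 \<in> lin_span_in D S" unfolding lin_span_in_def by (rule CollectI, rule exI[of _ 0]) simp
next
  fix x y assume "x \<in> lin_span_in D S" "y \<in> lin_span_in D S"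
  then obtain n m :: nat and c s c' s' :: "nat \<Rightarrow> 'a" where
    h: "\<forall>k<n. c k \<in> D \<and> s k \<in> S" "x = (\<Sum>k<n. c k * s k)"
       "\<forall>k<m. c' k \<in> D \<and> s' k \<in> S" "y = (\<Sum>k<m. c' k * s' k)"
    unfolding lin_span_in_def by blast
  define C where "C k = (if k < n then c k else c' (k - n))" for k
  define T where "T k = (if k < n then s k else s' (k - n))" for k
  have "\<forall>k<n+m. C k \<in> D \<and> T k \<in> S" using h unfolding C_def T_def by auto
  moreover have "x + y = (\<Sum>k<n+m. C k * T k)"
    unfolding sum_split_add h C_def T_def by simp
  ultimately show "x + y \<in> lin_span_in D S" unfolding lin_span_in_def
    by (intro CollectI exI[of _ "n+m"] exI[of _ C] exI[of _ T]) simp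
next
  fix d x assume d: "d \<in> D" and "x \<in> lin_span_in D S"
  then obtain n :: nat and c s :: "nat \<Rightarrow> 'a" where h: "\<forall>k<n. c k \<in> D \<and> s k \<in> S" "x = (\<Sum>k<n. c k * s k)"
    unfolding lin_span_in_def by blast
  have "\<forall>k<n. d * c k \<in> D \<and> s k \<in> S" using h d assms unfolding subdomain_def by auto
  moreover have "d * x = (\<Sum>k<n. (d * c k) * s k)" unfolding h by (simp add: sum_distrib_left mult.assoc)
  ultimately show "d * x \<in> lin_span_in D S" unfolding lin_span_in_def
    by (intro CollectI exI[of _ n] exI[of _ "\<lambda>k. d * c k"] exI[of _ s]) simp
qed

lemma dmodule_sum:
  assumes "dmodule D X" "\<forall>k<(n::nat). f k \<in> X" shows "(\<Sum>k<n. f k) \<in> X"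
  using assms(2) proof (induct n)
  case 0 then show ?case using assms(1) unfolding dmodule_def by simp
next
  case (Suc n) then show ?case using assms(1) unfolding dmodule_def by simp
qed

lemma span_least:
  assumes "dmodule D X" "S \<subseteq> X" shows "lin_span_in D S \<subseteq> X"
proof
  fix x assume "x \<in> lin_span_in D S"
  then obtain n :: nat and c s :: "nat \<Rightarrow> 'a" where h: "\<forall>k<n. c k \<in> D \<and> s k \<in> S" "x = (\<Sum>k<n. c k * s k)"
    unfolding lin_span_in_def by blast
  have "\<forall>k<n. c k * s k \<in> X" using h assms unfolding dmodule_def by blast
  then show "x \<in> X" using dmodule_sum[OF assms(1)] h by simp
qed

lemma span_sub: assumes "subdomain D" shows "S \<subseteq> lin_span_in D S"
proof
  fix x assume "x \<in> S"
  then have "\<forall>k<(1::nat). (\<lambda>_. 1) k \<in> D \<and> (\<lambda>_. x) k \<in> S" using assms unfolding subdomain_def by simp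
  moreover have "x = (\<Sum>k<(1::nat). (\<lambda>_. 1) k * (\<lambda>_. x) k)" by simp
  ultimately show "x \<in> lin_span_in D S" unfolding lin_span_in_def
    by (intro CollectI exI[of _ "1::nat"] exI[of _ "\<lambda>_. 1"] exI[of _ "\<lambda>_. x"]) simp
qed

lemma span_mono: "S \<subseteq> T \<Longrightarrow> lin_span_in D S \<subseteq> lin_span_in D T"
  unfolding lin_span_in_def by blast

lemma dmodule_ideal_sum:
  assumes "dmodule D A" "dmodule D B" shows "dmodule D (ideal_sum A B)"
  unfolding dmodule_def
proof (intro conjI ballI)
  show "0 \<in> ideal_sum A B" using ideal_sum_I[of 0 A 0 B] assms unfolding dmodule_def by simp
next
  fix x y assume "x \<in> ideal_sum A B" "y \<in> ideal_sum A B"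
  then obtain a b a' b' where h: "x = a + b" "y = a' + b'" "a \<in> A" "b \<in> B" "a' \<in> A" "b' \<in> B"
    unfolding ideal_sum_def by auto
  have eq: "x + y = (a + a') + (b + b')" using h by (simp add: algebra_simps)
  have m: "(a + a') + (b + b') \<in> ideal_sum A B" using ideal_sum_I[of "a+a'" A "b+b'" B] assms h unfolding dmodule_def by simp
  show "x + y \<in> ideal_sum A B" by (subst eq) (rule m)
next
  fix d x assume d: "d \<in> D" and "x \<in> ideal_sum A B"
  then obtain a b where h: "x = a + b" "a \<in> A" "b \<in> B"
    unfolding ideal_sum_def by auto
  have "d * x = d * a + d * b" using h by (simp add: algebra_simps)
  then show "d * x \<in> ideal_sum A B" using ideal_sum_I[of "d*a" A "d*b" B] assms h d unfolding dmodule_def by simp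
qed

lemma integral_frac:
  assumes "subdomain D" "dmodule D X" "X \<subseteq> D" "X \<noteq> {0}" shows "frac_ideal D X"
proof -
  have "1 \<in> D" using assms(1) unfolding subdomain_def by simp
  then show ?thesis using assms unfolding frac_ideal_def by (intro conjI bexI[of _ 1]) auto
qed

lemma D_dmodule: "subdomain D \<Longrightarrow> dmodule D D"
  unfolding subdomain_def dmodule_def by auto

lemma D_frac: "subdomain D \<Longrightarrow> frac_ideal D D"
  by (rule integral_frac) (auto simp: D_dmodule subdomain_def)

lemma in_quot: "subdomain D \<Longrightarrow> x \<in> D \<Longrightarrow> x \<in> quot_field D"
  unfolding quot_field_def subdomain_def by (intro CollectI exI[of _ x] exI[of _ 1]) simp

lemma so_scal1: "star_op D st \<Longrightarrow> x \<in> quot_field D - {0} \<Longrightarrow> st (scal x D) = scal x D"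
  apply (unfold star_op_def) apply (elim conjE) by (erule_tac x=x in ballE) auto
lemma so_scal: "star_op D st \<Longrightarrow> x \<in> quot_field D - {0} \<Longrightarrow> frac_ideal D I \<Longrightarrow> st (scal x I) = scal x (st I)"
  apply (unfold star_op_def) apply (elim conjE) by (erule_tac x=x in ballE) auto
lemma st_frac: "star_op D st \<Longrightarrow> frac_ideal D X \<Longrightarrow> frac_ideal D (st X)"
  apply (unfold star_op_def) apply (elim conjE) by simp
lemma st_ext: "star_op D st \<Longrightarrow> frac_ideal D X \<Longrightarrow> X \<subseteq> st X"
  apply (unfold star_op_def) apply (elim conjE) by simp
lemma st_mono: "star_op D st \<Longrightarrow> frac_ideal D X \<Longrightarrow> frac_ideal D Y \<Longrightarrow> X \<subseteq> Y \<Longrightarrow> st X \<subseteq> st Y"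
  apply (unfold star_op_def) apply (elim conjE) by simp
lemma st_idem: "star_op D st \<Longrightarrow> frac_ideal D X \<Longrightarrow> st (st X) = st X"
  apply (unfold star_op_def) apply (elim conjE) by simp

lemma st_D: assumes "subdomain D" "star_op D st" shows "st D = D"
proof -
  have "(1::'a) \<in> quot_field D - {0}" using in_quot[OF assms(1)] assms(1) unfolding subdomain_def by simp
  then have "st (scal 1 D) = scal 1 D" by (rule so_scal1[OF assms(2)])
  moreover have "scal 1 D = D" unfolding scal_def by simp
  ultimately show ?thesis by simp
qed

lemma st_sub_D:
  assumes "subdomain D" "star_op D st" "frac_ideal D X" "X \<subseteq> D" shows "st X \<subseteq> D"
proof -
  have "st X \<subseteq> st D" by (rule st_mono[OF assms(2,3) D_frac[OF assms(1)] assms(4)])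
  then show ?thesis using st_D[OF assms(1,2)] by simp
qed

lemma frac_dmod: "frac_ideal D X \<Longrightarrow> dmodule D X"
  unfolding frac_ideal_def by blast

lemma one_full:
  assumes "dmodule D Y" "1 \<in> Y" "Y \<subseteq> D" shows "Y = D"
proof
  show "D \<subseteq> Y"
  proof
    fix d assume "d \<in> D" then have "d * 1 \<in> Y" using assms unfolding dmodule_def by blast
    then show "d \<in> Y" by simp
  qed
qed (rule assms(3))





lemma scal_dmodule: "dmodule D I \<Longrightarrow> dmodule D (scal a I)"
  unfolding dmodule_def
proof (intro conjI ballI)
  assume h: "0 \<in> I \<and> (\<forall>x\<in>I. \<forall>y\<in>I. x + y \<in> I) \<and> (\<forall>d\<in>D. \<forall>x\<in>I. d * x \<in> I)"
  show "0 \<in> scal a I" using scal_I[of 0 I a] h by simp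
  fix x y assume "x \<in> scal a I" "y \<in> scal a I"
  then obtain u v where "x = a * u" "y = a * v" "u \<in> I" "v \<in> I" unfolding scal_def by auto
  then show "x + y \<in> scal a I" using scal_I[of "u+v" I a] h by (simp add: distrib_left)
next
  assume h: "0 \<in> I \<and> (\<forall>x\<in>I. \<forall>y\<in>I. x + y \<in> I) \<and> (\<forall>d\<in>D. \<forall>x\<in>I. d * x \<in> I)"
  fix d x assume "d \<in> D" "x \<in> scal a I"
  then obtain u where "x = a * u" "u \<in> I" unfolding scal_def by auto
  then show "d * x \<in> scal a I" using scal_I[of "d*u" I a] h \<open>d \<in> D\<close> by (simp add: mult.left_commute)
qed

lemma prod_in: "finite A \<Longrightarrow> subdomain D \<Longrightarrow> (\<forall>k\<in>A. f k \<in> D) \<Longrightarrow> prod f A \<in> D"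
  by (induct A rule: finite_induct) (auto simp: subdomain_def)

lemma max_facts:
  assumes "max_star_ideal D st M"
  shows "frac_ideal D M" "st M = M" "M \<subseteq> D" "M \<noteq> D" "0 \<in> M" "dmodule D M"
  using assms unfolding max_star_ideal_def star_ideal_def frac_ideal_def dmodule_def by auto

lemma max_maximal: "max_star_ideal D st M \<Longrightarrow> star_ideal D st N \<Longrightarrow> N \<subset> D \<Longrightarrow> M \<subseteq> N \<Longrightarrow> N = M"
  unfolding max_star_ideal_def by (elim conjE) blast

lemma Q_full:
  assumes sd: "subdomain D" and so: "star_op D st" and mx: "max_star_ideal D st M"
    and a: "a \<in> D" "a \<notin> M"
  shows "frac_ideal D (ideal_sum M (scal a D)) \<and> st (ideal_sum M (scal a D)) = D"
proof -
  let ?Q = "ideal_sum M (scal a D)"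
  note mf = max_facts[OF mx]
  have sd1: "1 \<in> D" "0 \<in> D" using sd unfolding subdomain_def by auto
  have dm: "dmodule D ?Q" by (rule dmodule_ideal_sum[OF mf(6) scal_dmodule[OF D_dmodule[OF sd]]])
  have sub: "?Q \<subseteq> D"
  proof
    fix y assume "y \<in> ?Q"
    then obtain m d where "y = m + a * d" "m \<in> M" "d \<in> D" unfolding ideal_sum_def scal_def by auto
    then show "y \<in> D" using mf(3) a sd unfolding subdomain_def by auto
  qed
  have aQ: "a \<in> ?Q" using ideal_sum_I[OF mf(5) scal_I[of 1 D a]] sd1 by simp
  have "a \<noteq> 0" using a mf(5) by auto
  then have nz: "?Q \<noteq> {0}" using nz_set[OF aQ] by simp
  have fQ: "frac_ideal D ?Q" by (rule integral_frac[OF sd dm sub nz])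
  have MQ: "M \<subseteq> ?Q"
  proof
    fix m assume "m \<in> M" then show "m \<in> ?Q" using ideal_sum_I[of m M "a*0" "scal a D"] scal_I[of 0 D a] sd1 by simp
  qed
  have stsub: "st ?Q \<subseteq> D" by (rule st_sub_D[OF sd so fQ sub])
  have si: "star_ideal D st (st ?Q)" unfolding star_ideal_def
    using st_frac[OF so fQ] st_idem[OF so fQ] by simp
  have "M \<subseteq> st ?Q" using MQ st_ext[OF so fQ] by blast
  moreover have "a \<in> st ?Q" using aQ st_ext[OF so fQ] by blast
  ultimately have "st ?Q = D"
  proof (cases "st ?Q = D")
    case False
    then have "st ?Q \<subset> D" using stsub by blast
    then have "st ?Q = M" using max_maximal[OF mx si] \<open>M \<subseteq> st ?Q\<close> by blast
    then show ?thesis using \<open>a \<in> st ?Q\<close> a(2) by simp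
  qed
  then show ?thesis using fQ by simp
qed

lemma prime_M:
  assumes sd: "subdomain D" and so: "star_op D st" and mx: "max_star_ideal D st M"
    and a: "a \<in> D" "a \<notin> M" and b: "b \<in> D" "b \<notin> M"
  shows "a * b \<notin> M"
proof
  assume ab: "a * b \<in> M"
  let ?Q = "ideal_sum M (scal a D)"
  note mf = max_facts[OF mx]
  have sd1: "1 \<in> D" "0 \<in> D" using sd unfolding subdomain_def by auto
  from Q_full[OF sd so mx a] have fQ: "frac_ideal D ?Q" and sQ: "st ?Q = D" by auto
  have b0: "b \<noteq> 0" using b mf(5) by auto
  have bq: "b \<in> quot_field D - {0}" using in_quot[OF sd b(1)] b0 by simp
  have e: "st (scal b ?Q) = scal b D"
  proof -
    have "st (scal b ?Q) = scal b (st ?Q)" by (rule so_scal[OF so bq fQ])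
    then show ?thesis using sQ by simp
  qed
  have sub: "scal b ?Q \<subseteq> M"
  proof
    fix y assume "y \<in> scal b ?Q"
    then obtain q where q: "y = b * q" "q \<in> ?Q" unfolding scal_def by blast
    then obtain m e where me: "q = m + e" "m \<in> M" "e \<in> scal a D" unfolding ideal_sum_def by blast
    then obtain d where "e = a * d" "d \<in> D" unfolding scal_def by blast
    then have y: "y = b * (m + a * d)" "m \<in> M" "d \<in> D" using q me by auto
    have "y = b * m + d * (a * b)" using y by (simp add: algebra_simps)
    moreover have "b * m \<in> M" using dm_mul[OF mf(6) b(1) y(2)] .
    moreover have "d * (a * b) \<in> M" using dm_mul[OF mf(6) y(3) ab] .
    ultimately show "y \<in> M" using dm_add[OF mf(6)] by simp
  qed
  have dm: "dmodule D (scal b ?Q)" by (rule scal_dmodule[OF frac_dmod[OF fQ]])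
  have "a \<in> ?Q" using ideal_sum_I[OF mf(5) scal_I[of 1 D a]] sd1 by simp
  then have "b * a \<in> scal b ?Q" by (rule scal_I)
  moreover have "b * a \<noteq> 0" using b0 a mf(5) by auto
  ultimately have nz: "scal b ?Q \<noteq> {0}" by (rule nz_set)
  have fb: "frac_ideal D (scal b ?Q)" using integral_frac[OF sd dm _ nz] sub mf(3) by blast
  have "st (scal b ?Q) \<subseteq> M" using st_mono[OF so fb mf(1) sub] mf(2) by simp
  moreover have "b \<in> scal b D" using scal_I[of 1 D b] sd1 by simp
  ultimately show False using e b by auto
qed

lemma prod_notin:
  assumes sd: "subdomain D" and so: "star_op D st" and mx: "max_star_ideal D st M"
  shows "finite A \<Longrightarrow> (\<forall>k\<in>A. f k \<in> D \<and> f k \<notin> M) \<Longrightarrow> prod f A \<in> D \<and> prod f A \<notin> M"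
proof (induct A rule: finite_induct)
  case empty
  note mf = max_facts[OF mx]
  have "1 \<notin> M"
  proof
    assume "1 \<in> M"
    then have "D \<subseteq> M" using one_full[OF mf(6)] mf(3) by simp
    then show False using mf(3,4) by blast
  qed
  then show ?case using sd1[OF sd] by simp
next
  case (insert x F)
  then have "f x * prod f F \<notin> M" using prime_M[OF sd so mx] by auto
  moreover have "f x * prod f F \<in> D" using insert sd_mul[OF sd] by auto
  ultimately show ?case using insert by simp
qed


lemma frac_span_s:
  assumes sd: "subdomain D" and s: "s \<in> D" "s \<noteq> 0" and S0: "S0 \<subseteq> D"
  shows "frac_ideal D (lin_span_in D (insert s S0))"
proof -
  have sub: "insert s S0 \<subseteq> D" using s S0 by simp
  have PD: "lin_span_in D (insert s S0) \<subseteq> D" by (rule span_least[OF D_dmodule[OF sd] sub])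
  have "s \<in> lin_span_in D (insert s S0)" using span_sub[OF sd] by blast
  then have "lin_span_in D (insert s S0) \<noteq> {0}" using nz_set s(2) by blast
  then show ?thesis using integral_frac[OF sd span_dmodule[OF sd] PD] by blast
qed

lemma big:
  assumes sd: "subdomain D" and so: "star_op D st" and fc: "finite_character D st"
    and hg: "star_homog D st I" and mx: "max_star_ideal D st M" and IM: "I \<subseteq> M"
    and s: "s \<in> D" "s \<notin> M"
    and J0: "frac_ideal D J0" "J0 = lin_span_in D S0" "finite S0" "I = st J0"
  shows "st (lin_span_in D (insert s S0)) = D"
proof (rule ccontr)
  let ?P = "lin_span_in D (insert s S0)"
  assume ne: "st ?P \<noteq> D"
  note mf = max_facts[OF mx]
  have ftI: "finite_type D st I" and IsD: "I \<subset> D" and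
    hc: "\<And>J L. finite_type D st J \<Longrightarrow> J \<subset> D \<Longrightarrow> I \<subseteq> J \<Longrightarrow>
            finite_type D st L \<Longrightarrow> L \<subset> D \<Longrightarrow> I \<subseteq> L \<Longrightarrow> st (ideal_sum J L) \<noteq> D"
    using hg unfolding star_homog_def by blast+
  have J0I: "J0 \<subseteq> I" using st_ext[OF so J0(1)] J0(4) by simp
  have S0J0: "S0 \<subseteq> J0" using span_sub[OF sd] J0(2) by simp
  have S0M: "S0 \<subseteq> M" using S0J0 J0I IM by blast
  have s0: "s \<noteq> 0" using s mf(5) by auto
  have fP: "frac_ideal D ?P" using frac_span_s[OF sd s(1) s0] S0M mf(3) by blast
  have sP: "s \<in> ?P" using span_sub[OF sd] by blast
  have PD: "?P \<subseteq> D" by (rule span_least[OF D_dmodule[OF sd]]) (use s S0M mf(3) in blast)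
  define A where "A = st ?P"
  have fA: "frac_ideal D A" unfolding A_def by (rule st_frac[OF so fP])
  have AD: "A \<subseteq> D" unfolding A_def by (rule st_sub_D[OF sd so fP PD])
  have ftA: "finite_type D st A" unfolding finite_type_def star_ideal_def
  proof (intro conjI exI[of _ ?P])
    show "frac_ideal D A" by (rule fA)
    show "st A = A" unfolding A_def by (rule st_idem[OF so fP])
    show "frac_ideal D ?P" by (rule fP)
    show "fin_gen D ?P" unfolding fin_gen_def by (intro exI[of _ "insert s S0"]) (simp add: J0(3))
    show "A = st ?P" by (simp add: A_def)
  qed
  have IA: "I \<subseteq> A" unfolding A_def J0(4)
    by (rule st_mono[OF so J0(1) fP]) (simp add: J0(2) span_mono subset_insertI)
  have AsD: "A \<subset> D" using AD ne A_def by blast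
  let ?Q = "ideal_sum M (scal s D)"
  from Q_full[OF sd so mx s] have fQ: "frac_ideal D ?Q" and sQ: "st ?Q = D" by auto
  have "1 \<in> st ?Q" using sQ sd1[OF sd] by simp
  moreover have "st ?Q = \<Union>{st J | J. frac_ideal D J \<and> fin_gen D J \<and> J \<subseteq> ?Q}"
    using fc fQ unfolding finite_character_def by blast
  ultimately have "1 \<in> \<Union>{st J | J. frac_ideal D J \<and> fin_gen D J \<and> J \<subseteq> ?Q}" by simp
  then obtain J' where J': "frac_ideal D J'" "fin_gen D J'" "J' \<subseteq> ?Q" "1 \<in> st J'"
    by blast
  then obtain S' where S': "finite S'" "J' = lin_span_in D S'" unfolding fin_gen_def by blast
  have S'Q: "S' \<subseteq> ?Q" using span_sub[OF sd] S' J'(3) by blast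
  have "\<forall>g\<in>S'. \<exists>m d. m \<in> M \<and> d \<in> D \<and> g = m + s * d"
    using S'Q unfolding ideal_sum_def scal_def by blast
  then have "\<exists>mm. \<forall>g\<in>S'. \<exists>d. mm g \<in> M \<and> d \<in> D \<and> g = mm g + s * d" by (rule bchoice)
  then obtain mm where "\<forall>g\<in>S'. \<exists>d. mm g \<in> M \<and> d \<in> D \<and> g = mm g + s * d" by (elim exE)
  then have "\<exists>dd. \<forall>g\<in>S'. mm g \<in> M \<and> dd g \<in> D \<and> g = mm g + s * dd g" by (rule bchoice)
  then obtain dd where mmdd: "\<forall>g\<in>S'. mm g \<in> M \<and> dd g \<in> D \<and> g = mm g + s * dd g" by (elim exE)
  define L0 where "L0 = lin_span_in D (mm ` S' \<union> S0)"
  have L0M: "L0 \<subseteq> M" unfolding L0_def using mmdd S0M by (intro span_least[OF mf(6)]) auto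
  have J0L0: "J0 \<subseteq> L0" unfolding L0_def J0(2) by (rule span_mono) blast
  have "J0 \<noteq> {0}" using J0(1) unfolding frac_ideal_def by blast
  moreover have "0 \<in> J0" using dm0[OF frac_dmod[OF J0(1)]] .
  ultimately have L0nz: "L0 \<noteq> {0}" using nz_sub[OF J0L0] by blast
  have L0D: "L0 \<subseteq> D" using L0M mf(3) by blast
  have fL0: "frac_ideal D L0" by (rule integral_frac[OF sd _ L0D L0nz]) (simp add: L0_def span_dmodule[OF sd])
  define L where "L = st L0"
  have fL: "frac_ideal D L" unfolding L_def by (rule st_frac[OF so fL0])
  have LM: "L \<subseteq> M" unfolding L_def using st_mono[OF so fL0 mf(1) L0M] mf(2) by simp
  have ftL: "finite_type D st L" unfolding finite_type_def star_ideal_def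
  proof (intro conjI exI[of _ L0])
    show "frac_ideal D L" by (rule fL)
    show "st L = L" unfolding L_def by (rule st_idem[OF so fL0])
    show "frac_ideal D L0" by (rule fL0)
    show "fin_gen D L0" unfolding fin_gen_def L0_def by (intro exI[of _ "mm ` S' \<union> S0"]) (simp add: J0(3) S'(1))
    show "L = st L0" by (simp add: L_def)
  qed
  have IL: "I \<subseteq> L" unfolding L_def J0(4) by (rule st_mono[OF so J0(1) fL0 J0L0])
  have LsD: "L \<subset> D" using LM mf(3,4) by blast
  define X where "X = ideal_sum A L"
  have stX: "st X \<noteq> D" unfolding X_def by (rule hc[OF ftA AsD IA ftL LsD IL])
  have dX: "dmodule D X" unfolding X_def by (rule dmodule_ideal_sum[OF frac_dmod[OF fA] frac_dmod[OF fL]])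
  have XD: "X \<subseteq> D"
  proof
    fix y assume "y \<in> X"
    then obtain a b where "y = a + b" "a \<in> A" "b \<in> L" unfolding X_def ideal_sum_def by auto
    then show "y \<in> D" using AD LM mf(3) sd_add[OF sd] by blast
  qed
  have AX: "A \<subseteq> X"
  proof
    fix a assume "a \<in> A"
    moreover have "0 \<in> L" using dm0[OF frac_dmod[OF fL]] .
    ultimately show "a \<in> X" using ideal_sum_I[of a A 0 L] unfolding X_def by simp
  qed
  have "A \<noteq> {0}" using fA unfolding frac_ideal_def by blast
  moreover have "0 \<in> A" using dm0[OF frac_dmod[OF fA]] .
  ultimately have Xnz: "X \<noteq> {0}" using nz_sub[OF AX] by blast
  have fX: "frac_ideal D X" by (rule integral_frac[OF sd dX XD Xnz])
  have S'X: "S' \<subseteq> X"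
  proof
    fix g assume g: "g \<in> S'"
    have "dd g * s \<in> ?P" using dm_mul[OF frac_dmod[OF fP] _ sP] mmdd g by blast
    then have 1: "s * dd g \<in> A" using st_ext[OF so fP] unfolding A_def by (auto simp: mult.commute)
    have "mm g \<in> L0" using span_sub[OF sd, of "mm ` S' \<union> S0"] g unfolding L0_def by blast
    then have 2: "mm g \<in> L" using st_ext[OF so fL0] unfolding L_def by blast
    have "g = s * dd g + mm g" using mmdd g by (simp add: add.commute)
    then show "g \<in> X" using ideal_sum_I[OF 1 2] unfolding X_def by simp
  qed
  have "J' \<subseteq> X" unfolding S'(2) by (rule span_least[OF dX S'X])
  then have "1 \<in> st X" using st_mono[OF so J'(1) fX] J'(4) by blast
  then have "st X = D" using one_full[OF frac_dmod[OF st_frac[OF so fX]]] st_sub_D[OF sd so fX XD] by blast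
  then show False using stX by simp
qed

theorem propositionG:
  fixes D :: "'a::field set" and st :: "'a set \<Rightarrow> 'a set" and I M :: "'a set"
  assumes "subdomain D"
    and "star_op D st"
    and "finite_character D st"
    and "star_homog D st I"
    and "max_star_ideal D st M"
    and "I \<subseteq> M"
  shows "ideal_mult I (localization D M) \<inter> D = I"
proof
  note sd = assms(1) and so = assms(2) and mx = assms(5)
  note mf = max_facts[OF mx]
  have sd1: "1 \<in> D" "0 \<in> D" using sd unfolding subdomain_def by auto
  have one_nM: "1 \<notin> M" using prod_notin[OF sd so mx, of "{}"] by simp
  have ftI: "finite_type D st I" and IsD: "I \<subset> D" using assms(4) unfolding star_homog_def by blast+
  have fI: "frac_ideal D I" and stI: "st I = I"
    using ftI unfolding finite_type_def star_ideal_def by blast+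
  have dI: "dmodule D I" by (rule frac_dmod[OF fI])
  show "I \<subseteq> ideal_mult I (localization D M) \<inter> D"
  proof
    fix i assume i: "i \<in> I"
    have "1 \<in> localization D M" unfolding localization_def using sd1 one_nM
      by (intro CollectI exI[of _ 1]) simp
    then have "\<forall>k<(1::nat). (\<lambda>_. i) k \<in> I \<and> (\<lambda>_. 1) k \<in> localization D M" using i by simp
    moreover have "i = (\<Sum>k<(1::nat). (\<lambda>_. i) k * (\<lambda>_. 1) k)" by simp
    ultimately have "i \<in> ideal_mult I (localization D M)" unfolding ideal_mult_def
      by (intro CollectI exI[of _ "1::nat"] exI[of _ "\<lambda>_. i"] exI[of _ "\<lambda>_. 1"]) simp
    then show "i \<in> ideal_mult I (localization D M) \<inter> D" using i IsD by blast
  qed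
  show "ideal_mult I (localization D M) \<inter> D \<subseteq> I"
  proof
    fix x assume "x \<in> ideal_mult I (localization D M) \<inter> D"
    then obtain n :: nat and f g :: "nat \<Rightarrow> 'a" where
      h: "\<forall>k<n. f k \<in> I \<and> g k \<in> localization D M" "x = (\<Sum>k<n. f k * g k)" and xD: "x \<in> D"
      unfolding ideal_mult_def by blast
    have "\<forall>k<n. \<exists>a t. a \<in> D \<and> t \<in> D \<and> t \<notin> M \<and> g k = a / t"
      using h(1) unfolding localization_def by blast
    then have "\<forall>k\<in>{..<n}. \<exists>a t. a \<in> D \<and> t \<in> D \<and> t \<notin> M \<and> g k = a / t" by simp
    then have "\<exists>aa. \<forall>k\<in>{..<n}. \<exists>t. aa k \<in> D \<and> t \<in> D \<and> t \<notin> M \<and> g k = aa k / t" by (rule bchoice)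
    then obtain aa where "\<forall>k\<in>{..<n}. \<exists>t. aa k \<in> D \<and> t \<in> D \<and> t \<notin> M \<and> g k = aa k / t" by (elim exE)
    then have "\<exists>tt. \<forall>k\<in>{..<n}. aa k \<in> D \<and> tt k \<in> D \<and> tt k \<notin> M \<and> g k = aa k / tt k" by (rule bchoice)
    then obtain tt where at0: "\<forall>k\<in>{..<n}. aa k \<in> D \<and> tt k \<in> D \<and> tt k \<notin> M \<and> g k = aa k / tt k" by (elim exE)
    then have at: "\<forall>k<n. aa k \<in> D \<and> tt k \<in> D \<and> tt k \<notin> M \<and> g k = aa k / tt k" by simp
    define s where "s = (\<Prod>k<n. tt k)"
    have sDM: "s \<in> D \<and> s \<notin> M" unfolding s_def using prod_notin[OF sd so mx, of "{..<n}" tt] at by simp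
    have "s * x = (\<Sum>k<n. (aa k * (\<Prod>j\<in>{..<n}-{k}. tt j)) * f k)"
      unfolding h(2) sum_distrib_left
    proof (rule sum.cong)
      fix k assume k: "k \<in> {..<n}"
      have t0: "tt k \<noteq> 0" using at k mf(5) by auto
      have "s = tt k * (\<Prod>j\<in>{..<n}-{k}. tt j)" unfolding s_def using k by (simp add: prod.remove)
      then show "s * (f k * g k) = aa k * (\<Prod>j\<in>{..<n}-{k}. tt j) * f k"
        using at k t0 by (simp add: field_simps)
    qed simp
    moreover have "\<forall>k<n. (aa k * (\<Prod>j\<in>{..<n}-{k}. tt j)) * f k \<in> I"
    proof (intro allI impI)
      fix k assume k: "k < n"
      have "\<forall>j\<in>{..<n}-{k}. tt j \<in> D" using at by auto
      then have "(\<Prod>j\<in>{..<n}-{k}. tt j) \<in> D" by (rule prod_in[OF _ sd, rotated]) simp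
      then have "aa k * (\<Prod>j\<in>{..<n}-{k}. tt j) \<in> D" using at k sd_mul[OF sd] by blast
      then show "(aa k * (\<Prod>j\<in>{..<n}-{k}. tt j)) * f k \<in> I" using dm_mul[OF dI] h(1) k by blast
    qed
    ultimately have sxI: "s * x \<in> I" using dmodule_sum[OF dI] by simp
    show "x \<in> I"
    proof (cases "x = 0")
      case True then show ?thesis using dm0[OF dI] by simp
    next
      case False
      obtain J0 where J0: "frac_ideal D J0" "fin_gen D J0" "I = st J0"
        using ftI unfolding finite_type_def by blast
      then obtain S0 where S0: "finite S0" "J0 = lin_span_in D S0" unfolding fin_gen_def by blast
      let ?P = "lin_span_in D (insert s S0)"
      have stP: "st ?P = D" by (rule big[OF sd so assms(3) assms(4) mx assms(6) _ _ J0(1) S0(2) S0(1) J0(3)]) (use sDM in auto)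
      have J0I: "J0 \<subseteq> I" using st_ext[OF so J0(1)] J0(3) by simp
      have S0I: "S0 \<subseteq> I" using span_sub[OF sd] S0(2) J0I by blast
      define X where "X = {y \<in> D. x * y \<in> I}"
      have dX: "dmodule D X" unfolding dmodule_def X_def
      proof (intro conjI ballI)
        show "0 \<in> {y \<in> D. x * y \<in> I}" using sd1 dm0[OF dI] by simp
      next
        fix y z assume "y \<in> {y \<in> D. x * y \<in> I}" "z \<in> {y \<in> D. x * y \<in> I}"
        then show "y + z \<in> {y \<in> D. x * y \<in> I}" using sd_add[OF sd] dm_add[OF dI]
          by (simp add: distrib_left)
      next
        fix d y assume d: "d \<in> D" and "y \<in> {y \<in> D. x * y \<in> I}"
        then have y: "y \<in> D" "x * y \<in> I" by auto
        have m: "d * (x * y) \<in> I" by (rule dm_mul[OF dI d y(2)])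
        have eq: "x * (d * y) = d * (x * y)" by (simp add: mult.left_commute)
        have "x * (d * y) \<in> I" by (subst eq) (rule m)
        moreover have "d * y \<in> D" by (rule sd_mul[OF sd d y(1)])
        ultimately show "d * y \<in> {y \<in> D. x * y \<in> I}" by simp
      qed
      have "insert s S0 \<subseteq> X"
      proof
        fix y assume "y \<in> insert s S0"
        then show "y \<in> X"
        proof
          assume "y = s" then show ?thesis using sDM sxI unfolding X_def by (simp add: mult.commute)
        next
          assume "y \<in> S0" then have "y \<in> I" using S0I by blast
          then show ?thesis using xD dm_mul[OF dI xD] IsD unfolding X_def by blast
        qed
      qed
      then have PX: "?P \<subseteq> X" by (rule span_least[OF dX])
      have xP: "scal x ?P \<subseteq> I" using PX unfolding X_def scal_def by blast
      have s0: "s \<noteq> 0" using sDM mf(5) by auto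
      have S0D: "S0 \<subseteq> D" using S0I IsD by blast
      have fP: "frac_ideal D ?P" by (rule frac_span_s[OF sd _ s0 S0D]) (use sDM in simp)
      have "s \<in> ?P" using span_sub[OF sd] by blast
      then have "x * s \<in> scal x ?P" by (rule scal_I)
      moreover have "x * s \<noteq> 0" using False s0 by simp
      ultimately have nz: "scal x ?P \<noteq> {0}" by (rule nz_set)
      have fxP: "frac_ideal D (scal x ?P)"
        using integral_frac[OF sd scal_dmodule[OF frac_dmod[OF fP]] _ nz] xP IsD by blast
      have xq: "x \<in> quot_field D - {0}" using in_quot[OF sd xD] False by simp
      have "st (scal x ?P) = scal x (st ?P)" by (rule so_scal[OF so xq fP])
      then have "st (scal x ?P) = scal x D" using stP by simp
      moreover have "x \<in> scal x D" using scal_I[of 1 D x] sd1 by simp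
      moreover have "st (scal x ?P) \<subseteq> I" using st_mono[OF so fxP fI xP] stI by simp
      ultimately show ?thesis by blast
    qed
  qed
qed

end
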